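(* Assume $\mathfrak p=\mathfrak c$ (e.g. CH). Then there exist a set of reals $X$ of cardinality $\mathfrak c$ and a countable subset $Q\subseteq X$ such that $X$ satisfies $\binom{\Omega}{\Gamma}$ while $X\setminus Q$ does not satisfy $\mathrm{Split}(C_{\mathrm T},C_{\mathrm T})$.
   Context: A set of reals is an infinite topological space homeomorphic to a subset of $\mathbb R$. A cover of a space $X$ is a family $\mathcal U$ of subsets of $X$ with $\bigcup\mathcal U=X$ such that $X\not\subseteq U$ for all $U\in\mathcal U$. A cover $\mathcal U$ is: an $\omega$-cover if every finite subset of $X$ is contained in some member; a $\tau$-cover if every $x\in X$ lies in infinitely many members and for all $x,y\in X$ at least one of $\{U\in\mathcal U: x\in U, y\notin U\}$, $\{U\in\mathcal U: y\in U, x\notin U\}$ is finite; a $\gamma$-cover if it is infinite and each $x\in X$ lies in all but finitely many members. $\Omega,\Gamma$ are the collections of open $\omega$-covers and open $\gamma$-covers of $X$; $C_{\mathrm T}$ is the collection of countable clopen $\tau$-covers of $X$. $X$ satisfies $\binom{\mathfrak U}{\mathfrak V}$ if every $\mathcal U\in\mathfrak U$ has a subfamily in $\mathfrak V$; $X$ satisfies $\mathrm{Split}(\mathfrak U,\mathfrak V)$ if every $\mathcal U\in\mathfrak U$ can be partitioned into two disjoint subfamilies each containing a subfamily in $\mathfrak V$. $\mathfrak p$ is the minimal cardinality of a family $F$ of infinite subsets of $\mathbb N$ such that every finite intersection of members of $F$ is infinite but there is no infinite $a\subseteq\mathbb N$ with $a\setminus y$ finite for all $y\in F$; $\mathfrak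 c=2^{\aleph_0}$. *)

theory Defs
  imports "HOL-Analysis.Analysis"
begin


definition p_family :: "nat set set \<Rightarrow> bool" where
  "p_family F \<longleftrightarrow> (\<forall>y\<in>F. infinite y)
     \<and> (\<forall>G. finite G \<and> G \<noteq> {} \<and> G \<subseteq> F \<longrightarrow> infinite (\<Inter>G))
     \<and> \<not> (\<exists>a. infinite a \<and> (\<forall>y\<in>F. finite (a - y)))"

definition p_eq_c :: bool where
  "p_eq_c \<longleftrightarrow> (\<exists>F. p_family F \<and> ordIso2 (card_of F) (card_of (UNIV :: real set))
                  \<and> (\<forall>G. p_family G \<longrightarrow> ordLeq3 (card_of F) (card_of G)))"

definition is_cover :: "real set \<Rightarrow> real set set \<Rightarrow> bool" where
  "is_cover X U \<longleftrightarrow> (\<forall>u\<in>U. u \<subseteq> X) \<and> \<Union>U = X \<and> (\<forall>u\<in>U. \<not> X \<subseteq> u)"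

definition omega_cover :: "real set \<Rightarrow> real set set \<Rightarrow> bool" where
  "omega_cover X U \<longleftrightarrow> is_cover X U \<and>
     (\<forall>F. finite F \<and> F \<subseteq> X \<longrightarrow> (\<exists>u\<in>U. F \<subseteq> u))"

definition tau_cover :: "real set \<Rightarrow> real set set \<Rightarrow> bool" where
  "tau_cover X U \<longleftrightarrow> is_cover X U \<and>
     (\<forall>x\<in>X. infinite {u\<in>U. x \<in> u}) \<and>
     (\<forall>x\<in>X. \<forall>y\<in>X. finite {u\<in>U. x \<in> u \<and> y \<notin> u} \<or> finite {u\<in>U. y \<in> u \<and> x \<notin> u})"

definition gamma_cover :: "real set \<Rightarrow> real set set \<Rightarrow> bool" where
  "gamma_cover X U \<longleftrightarrow> is_cover X U \<and> infinite U \<and>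
     (\<forall>x\<in>X. finite {u\<in>U. x \<notin> u})"

definition OmegaC :: "real set \<Rightarrow> real set set set" where
  "OmegaC X = {U. omega_cover X U \<and> (\<forall>u\<in>U. openin (top_of_set X) u)}"

definition GammaC :: "real set \<Rightarrow> real set set set" where
  "GammaC X = {U. gamma_cover X U \<and> (\<forall>u\<in>U. openin (top_of_set X) u)}"

definition CT :: "real set \<Rightarrow> real set set set" where
  "CT X = {U. countable U \<and> tau_cover X U \<and>
              (\<forall>u\<in>U. openin (top_of_set X) u \<and> closedin (top_of_set X) u)}"

definition binom :: "(real set \<Rightarrow> real set set set) \<Rightarrow> (real set \<Rightarrow> real set set set) \<Rightarrow> real set \<Rightarrow> bool" where
  "binom A B X \<longleftrightarrow> (\<forall>U\<in>A X. \<exists>V. V \<subseteq> U \<and> V \<in> B X)"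

definition Split :: "(real set \<Rightarrow> real set set set) \<Rightarrow> (real set \<Rightarrow> real set set set) \<Rightarrow> real set \<Rightarrow> bool" where
  "Split A B X \<longleftrightarrow> (\<forall>U\<in>A X. \<exists>U1 U2. U1 \<union> U2 = U \<and> U1 \<inter> U2 = {} \<and>
      (\<exists>V. V \<subseteq> U1 \<and> V \<in> B X) \<and> (\<exists>V. V \<subseteq> U2 \<and> V \<in> B X))"

end

theory Submission
  imports Defs
begin

unbundle cardinal_syntax


definition ee :: "nat set \<Rightarrow> real" where
  "ee y = (\<Sum>n. if n \<in> y then 2 / 3^(Suc n) else 0)"

definition ff :: "nat set \<Rightarrow> nat \<Rightarrow> real" where
  "ff y n = (if n \<in> y then 2 / 3^(Suc n) else 0)"

lemma geo_sum: "summable (\<lambda>n. 2 / 3^(Suc (n + k)) :: real)"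
  "(\<Sum>n. 2 / 3^(Suc (n + k)) :: real) = 1 / 3^k"
proof -
  have eq: "(\<lambda>n. 2 / 3^(Suc (n + k)) :: real) = (\<lambda>n. (2 / 3^(Suc k)) * (1/3)^n)"
    by (auto simp: power_add field_simps)
  have s: "(\<lambda>n. (1/3::real)^n) sums (1 / (1 - 1/3))" by (rule geometric_sums) simp
  hence "(\<lambda>n. (2 / 3^(Suc k)) * (1/3::real)^n) sums ((2 / 3^(Suc k)) * (1 / (1 - 1/3)))"
    by (rule sums_mult)
  moreover have "(2 / 3^(Suc k)) * (1 / (1 - 1/3)) = (1 / 3^k :: real)" by (simp add: field_simps)
  ultimately have "(\<lambda>n. (2 / 3^(Suc k)) * (1/3::real)^n) sums (1/3^k)" by (simp only:)
  hence "(\<lambda>n. 2 / 3^(Suc (n + k)) :: real) sums (1/3^k)" unfolding eq .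
  thus "summable (\<lambda>n. 2 / 3^(Suc (n + k)) :: real)" "(\<Sum>n. 2 / 3^(Suc (n + k)) :: real) = 1 / 3^k"
    by (auto simp: sums_iff)
qed

lemma ff_summable: "summable (ff y)"
proof (rule summable_comparison_test')
  show "summable (\<lambda>n. 2 / 3^(Suc (n + 0)) :: real)" by (rule geo_sum)
  show "norm (ff y n) \<le> 2 / 3^(Suc (n + 0))" for n by (auto simp: ff_def)
qed

lemma ee_ff: "ee y = suminf (ff y)" unfolding ee_def ff_def ..

lemma diff_summable: "summable (\<lambda>n. ff y n - ff y' n)"
  using ff_summable summable_diff by blast

lemma ee_diff: "ee y - ee y' = (\<Sum>n. ff y n - ff y' n)"
  by (simp add: ee_ff suminf_diff ff_summable)

lemma tail_bound:
  "\<bar>\<Sum>n. ff y (n + k) - ff y' (n + k)\<bar> \<le> 1 / 3^k"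
proof -
  let ?d = "\<lambda>n. ff y (n + k) - ff y' (n + k)"
  let ?h = "\<lambda>n. 2 / 3^(Suc (n + k)) :: real"
  have sd: "summable ?d" using diff_summable[of y y'] summable_iff_shift[of "\<lambda>n. ff y n - ff y' n" k] by simp
  have b1: "?d n \<le> ?h n" for n by (auto simp: ff_def field_simps)
  have b2: "- ?h n \<le> ?d n" for n by (auto simp: ff_def field_simps)
  have "suminf ?d \<le> suminf ?h" by (rule suminf_le[OF b1 sd geo_sum(1)])
  moreover have "suminf (\<lambda>n. - ?h n) \<le> suminf ?d"
    by (rule suminf_le[OF b2 _ sd]) (use geo_sum(1) summable_minus in blast)
  moreover have "suminf (\<lambda>n. - ?h n) = - suminf ?h" using geo_sum(1) suminf_minus by blast
  ultimately show ?thesis using geo_sum(2)[of k] by linarith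
qed

lemma ee_close:
  assumes "y \<inter> {..<k} = y' \<inter> {..<k}"
  shows "\<bar>ee y - ee y'\<bar> \<le> 1 / 3^k"
proof -
  have sd: "summable (\<lambda>n. ff y n - ff y' n)" by (rule diff_summable)
  have "(\<Sum>n. ff y n - ff y' n) = (\<Sum>n. ff y (n + k) - ff y' (n + k)) + (\<Sum>i<k. ff y i - ff y' i)"
    using suminf_split_initial_segment[OF sd, of k] by simp
  moreover have "(\<Sum>i<k. ff y i - ff y' i) = 0"
  proof (rule sum.neutral, safe)
    fix i assume "i < k"
    hence "(i \<in> y) = (i \<in> y')" using assms by blast
    thus "ff y i - ff y' i = 0" by (simp add: ff_def)
  qed
  ultimately show ?thesis using ee_diff[of y y'] tail_bound[of y k y'] by simp
qed

lemma ee_first: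
  assumes "m \<in> y" "m \<notin> y'" "y \<inter> {..<m} = y' \<inter> {..<m}"
  shows "ee y - ee y' \<ge> 1 / 3^(Suc m)"
proof -
  have sd: "summable (\<lambda>n. ff y n - ff y' n)" by (rule diff_summable)
  have "(\<Sum>n. ff y n - ff y' n) = (\<Sum>n. ff y (n + Suc m) - ff y' (n + Suc m)) + (\<Sum>i<Suc m. ff y i - ff y' i)"
    using suminf_split_initial_segment[OF sd, of "Suc m"] by simp
  moreover have "(\<Sum>i<Suc m. ff y i - ff y' i) = 2 / 3^(Suc m)"
  proof -
    have "(\<Sum>i<m. ff y i - ff y' i) = 0"
    proof (rule sum.neutral, safe)
      fix i assume "i < m"
      hence "(i \<in> y) = (i \<in> y')" using assms by blast
      thus "ff y i - ff y' i = 0" by (simp add: ff_def)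
    qed
    thus ?thesis using assms by (simp add: ff_def)
  qed
  ultimately show ?thesis using ee_diff[of y y'] tail_bound[of y "Suc m" y'] by simp
qed

lemma ee_far:
  assumes "y \<inter> {..<k} \<noteq> y' \<inter> {..<k}"
  shows "\<bar>ee y - ee y'\<bar> \<ge> 1 / 3^k"
proof -
  define m where "m = (LEAST m. (m \<in> y) \<noteq> (m \<in> y'))"
  have ex: "\<exists>m<k. (m \<in> y) \<noteq> (m \<in> y')" using assms by blast
  then obtain m0 where m0: "m0 < k" "(m0 \<in> y) \<noteq> (m0 \<in> y')" by blast
  have mk1: "(m \<in> y) \<noteq> (m \<in> y')" unfolding m_def by (rule LeastI[of _ m0]) (rule m0(2))
  have "m \<le> m0" unfolding m_def by (rule Least_le) (rule m0(2))
  hence mk: "(m \<in> y) \<noteq> (m \<in> y')" "m < k" using m0(1) mk1 by auto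
  have below: "y \<inter> {..<m} = y' \<inter> {..<m}"
    using not_less_Least[where P="\<lambda>m. (m \<in> y) \<noteq> (m \<in> y')"] unfolding m_def by blast
  have le: "1 / 3^k \<le> (1 / 3^(Suc m) :: real)"
  proof -
    have "(3::real)^Suc m \<le> 3^k" by (rule power_increasing) (use mk(2) in auto)
    thus ?thesis by (intro divide_left_mono) auto
  qed
  show ?thesis
  proof (cases "m \<in> y")
    case True
    with mk have "ee y - ee y' \<ge> 1 / 3^(Suc m)" using ee_first below by blast
    thus ?thesis using le by linarith
  next
    case False
    with mk have "m \<in> y'" by blast
    hence "ee y' - ee y \<ge> 1 / 3^(Suc m)" using ee_first[of m y' y] below False by blast
    thus ?thesis using le by linarith
  qed
qed

lemma ee_inj: "inj ee"
proof (rule injI)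
  fix y y' assume "ee y = ee y'"
  show "y = y'"
  proof (rule ccontr)
    assume "y \<noteq> y'"
    then obtain m where "(m \<in> y) \<noteq> (m \<in> y')" by blast
    hence "y \<inter> {..<Suc m} \<noteq> y' \<inter> {..<Suc m}" by blast
    from ee_far[OF this] \<open>ee y = ee y'\<close> have "1 / 3^(Suc m) \<le> (0::real)" by simp
    moreover have "(0::real) < 1 / 3^(Suc m)" by simp
    ultimately show False by linarith
  qed
qed



definition sfip :: "nat set set \<Rightarrow> bool" where
  "sfip F \<longleftrightarrow> (\<forall>y\<in>F. infinite y) \<and> (\<forall>G. finite G \<and> G \<noteq> {} \<and> G \<subseteq> F \<longrightarrow> infinite (\<Inter>G))"

lemma p_lemma:
  assumes pc: "p_eq_c" and s: "sfip F" and c: "|F| <o |UNIV::real set|"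
  shows "\<exists>a. infinite a \<and> (\<forall>y\<in>F. finite (a - y))"
proof (rule ccontr)
  assume "\<not> ?thesis"
  hence pf: "p_family F" using s by (auto simp: p_family_def sfip_def)
  from pc obtain F0 where F0: "p_family F0" "|F0| =o |UNIV::real set|" "\<forall>G. p_family G \<longrightarrow> |F0| \<le>o |G|"
    unfolding p_eq_c_def by blast
  have "|F0| \<le>o |F|" using F0(3) pf by blast
  hence "|F0| <o |UNIV::real set|" by (rule ordLeq_ordLess_trans[OF _ c])
  hence "|F0| <o |F0|" by (rule ordLess_ordIso_trans[OF _ ordIso_symmetric[OF F0(2)]])
  thus False using ordLess_irreflexive by blast
qed

lemma countable_less_c:
  assumes "countable A" shows "|A| <o |UNIV::real set|"
proof -
  from assms obtain f :: "_ \<Rightarrow> nat" where "inj_on f A" unfolding countable_def by blast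
  hence a: "|A| \<le>o |UNIV::nat set|" using card_of_ordLeq[of A "UNIV::nat set"] by auto
  have "\<not> |UNIV::real set| \<le>o |UNIV::nat set|"
  proof
    assume "|UNIV::real set| \<le>o |UNIV::nat set|"
    then obtain g :: "real \<Rightarrow> nat" where "inj_on g UNIV" using card_of_ordLeq[of "UNIV::real set" "UNIV::nat set"] by auto
    hence "countable (UNIV::real set)" unfolding countable_def by blast
    thus False using uncountable_UNIV_real by blast
  qed
  hence "|UNIV::nat set| <o |UNIV::real set|"
    using not_ordLeq_iff_ordLess[OF card_of_Well_order card_of_Well_order] by auto
  thus ?thesis by (rule ordLeq_ordLess_trans[OF a])
qed

lemma linear_min:
  assumes lin: "\<forall>s\<in>T. \<forall>t\<in>T. finite (s - t) \<or> finite (t - s)"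
  shows "finite G \<Longrightarrow> G \<noteq> {} \<Longrightarrow> G \<subseteq> T \<Longrightarrow> \<exists>m\<in>G. \<forall>g\<in>G. finite (m - g)"
proof (induction G rule: finite_ne_induct)
  case (singleton x) show ?case by simp
next
  case (insert x G)
  then obtain m where m: "m \<in> G" "\<forall>g\<in>G. finite (m - g)" by auto
  have "finite (x - m) \<or> finite (m - x)" using lin insert.prems m(1) by blast
  thus ?case
  proof
    assume h: "finite (x - m)"
    have "\<forall>g\<in>insert x G. finite (x - g)"
    proof
      fix g assume "g \<in> insert x G"
      thus "finite (x - g)"
      proof
        assume "g = x" thus ?thesis by simp
      next
        assume "g \<in> G"
        hence "finite (m - g)" using m by blast
        moreover have "x - g \<subseteq> (x - m) \<union> (m - g)" by blast
        ultimately show ?thesis using h by (meson finite_UnI finite_subset)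
      qed
    qed
    thus ?case by blast
  next
    assume "finite (m - x)"
    thus ?case using m by blast
  qed
qed

lemma sfip_linear:
  assumes inf: "\<forall>y\<in>T. infinite y" and lin: "\<forall>s\<in>T. \<forall>t\<in>T. finite (s - t) \<or> finite (t - s)"
  shows "sfip T"
  unfolding sfip_def
proof (intro conjI allI impI)
  show "\<forall>y\<in>T. infinite y" by (rule inf)
  fix G assume G: "finite G \<and> G \<noteq> {} \<and> G \<subseteq> T"
  then obtain m where m: "m \<in> G" "\<forall>g\<in>G. finite (m - g)" using linear_min[OF lin] by blast
  have "m \<subseteq> \<Inter>G \<union> (\<Union>g\<in>G. m - g)" by blast
  moreover have "finite (\<Union>g\<in>G. m - g)" using G m(2) by (intro finite_UN_I) auto
  moreover have "infinite m" using m G inf by blast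
  ultimately show "infinite (\<Inter>G)" by (meson finite_UnI finite_subset)
qed

definition Vc :: "nat \<times> nat set set \<Rightarrow> nat set set" where
  "Vc c = {y. y \<inter> {..<fst c} \<in> snd c}"

definition Codes :: "(nat \<times> nat set set) set" where
  "Codes = (\<Union>k. {k} \<times> Pow (Pow {..<k}))"

lemma countable_Codes: "countable Codes"
  unfolding Codes_def
proof (rule countable_UN)
  show "countable (UNIV :: nat set)" by simp
  fix k :: nat
  have "finite ({k} \<times> Pow (Pow {..<k}))" by simp
  thus "countable ({k} \<times> Pow (Pow {..<k}))" by (rule countable_finite)
qed

definition code :: "nat \<Rightarrow> nat \<times> nat set set" where
  "code = from_nat_into Codes"

lemma code_onto: "c \<in> Codes \<Longrightarrow> \<exists>n. code n = c"
  unfolding code_def using from_nat_into_surj[OF countable_Codes] by blast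

definition VV :: "nat \<Rightarrow> nat set set" where "VV n = Vc (code n)"

lemma Vc_gap:
  assumes "Pow {..<j} \<subseteq> Vc c" "y \<inter> {j..<fst c} = {}"
  shows "y \<in> Vc c"
proof -
  have "y \<inter> {..<j} \<in> Pow {..<j}" by simp
  hence "y \<inter> {..<j} \<in> Vc c" using assms(1) by (rule subsetD[rotated])
  moreover have "(y \<inter> {..<j}) \<inter> {..<fst c} = y \<inter> {..<fst c}"
  proof (rule set_eqI)
    fix x
    have "x \<in> y \<Longrightarrow> x < fst c \<Longrightarrow> x < j"
    proof (rule ccontr)
      assume "x \<in> y" "x < fst c" "\<not> x < j"
      hence "x \<in> y \<inter> {j..<fst c}" by auto
      thus False using assms(2) by blast
    qed
    thus "x \<in> (y \<inter> {..<j}) \<inter> {..<fst c} \<longleftrightarrow> x \<in> y \<inter> {..<fst c}" by auto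
  qed
  ultimately show ?thesis by (simp add: Vc_def)
qed



lemma Z_lemma:
  assumes pc: "p_eq_c" and Yc: "|Y| <o |UNIV::real set|" and Fin: "{y. finite y} \<subseteq> Y"
    and good: "\<forall>F. finite F \<and> F \<subseteq> Y \<longrightarrow> infinite {n\<in>a. F \<subseteq> VV n}" and p: "infinite p"
  shows "\<exists>z K. infinite (p \<inter> z) \<and> K \<subseteq> a \<and> infinite K \<and> (\<forall>y\<in>Y. finite {n\<in>K. y \<notin> VV n})
           \<and> (\<forall>y. finite (y - z) \<longrightarrow> finite {n\<in>K. y \<notin> VV n})"
proof -
  define S where "S y = {n\<in>a. y \<in> VV n}" for y
  have Sinf: "infinite (S y)" if "y \<in> Y" for y
  proof -
    have "{n\<in>a. {y} \<subseteq> VV n} = S y" by (auto simp: S_def)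
    moreover have "infinite {n\<in>a. {y} \<subseteq> VV n}" using good[rule_format, of "{y}"] that by simp
    ultimately show ?thesis by simp
  qed
  have sf: "sfip (S ` Y)"
    unfolding sfip_def
  proof (intro conjI allI impI ballI)
    fix t assume "t \<in> S ` Y"
    then obtain y where "y \<in> Y" "t = S y" by auto
    thus "infinite t" using Sinf by simp
  next
    fix G assume G: "finite G \<and> G \<noteq> {} \<and> G \<subseteq> S ` Y"
    then obtain F where F: "F \<subseteq> Y" "finite F" "G = S ` F"
      using finite_subset_image[of G S Y] by auto
    have "F \<noteq> {}" using G F by auto
    have "\<Inter>G = {n\<in>a. F \<subseteq> VV n}" using \<open>F \<noteq> {}\<close> by (auto simp: F(3) S_def)
    thus "infinite (\<Inter>G)" using good F by simp
  qed
  have "|S ` Y| <o |UNIV::real set|" by (rule ordLeq_ordLess_trans[OF card_of_image Yc])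
  then obtain K0 where K0: "infinite K0" "\<forall>t\<in>S ` Y. finite (K0 - t)"
    using p_lemma[OF pc sf] by blast
  have K0S: "finite (K0 - S y)" if "y \<in> Y" for y using K0(2) that by simp
  define K1 where "K1 = K0 \<inter> a"
  have e: "{} \<in> Y" using Fin by auto
  have "K0 \<subseteq> (K0 - S {}) \<union> K1" by (auto simp: K1_def S_def)
  moreover have "finite (K0 - S {})" using K0S e by simp
  ultimately have K1inf: "infinite K1" using K0(1) by (meson finite_UnI finite_subset)
  have K1a: "K1 \<subseteq> a" by (simp add: K1_def)
  have K1S: "finite {n\<in>K1. y \<notin> VV n}" if "y \<in> Y" for y
  proof -
    have "{n\<in>K1. y \<notin> VV n} \<subseteq> K0 - S y" by (auto simp: K1_def S_def)
    thus ?thesis using K0S[OF that] by (rule finite_subset)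
  qed
  have bad: "finite {n\<in>K1. \<not> Pow {..<j} \<subseteq> VV n}" for j
  proof -
    have "{n\<in>K1. \<not> Pow {..<j} \<subseteq> VV n} \<subseteq> (\<Union>s\<in>Pow {..<j}. {n\<in>K1. s \<notin> VV n})" by auto
    moreover have "finite (\<Union>s\<in>Pow {..<j}. {n\<in>K1. s \<notin> VV n})"
    proof (rule finite_UN_I)
      show "finite (Pow {..<j})" by simp
      fix s assume "s \<in> Pow {..<j}"
      hence "finite s" using finite_subset by auto
      hence "s \<in> Y" using Fin by auto
      thus "finite {n\<in>K1. s \<notin> VV n}" by (rule K1S)
    qed
    ultimately show ?thesis by (rule finite_subset)
  qed
  have pick_n: "\<exists>n. n \<in> K1 \<and> N0 \<le> n \<and> Pow {..<j} \<subseteq> VV n" for j N0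
  proof -
    have "infinite (K1 - {n\<in>K1. \<not> Pow {..<j} \<subseteq> VV n})"
      by (rule Diff_infinite_finite[OF bad K1inf])
    then obtain n where "n \<in> K1 - {n\<in>K1. \<not> Pow {..<j} \<subseteq> VV n}" "N0 \<le> n"
      using infinite_nat_iff_unbounded_le by meson
    thus ?thesis by auto
  qed
  have pick_q: "\<exists>q. q \<in> p \<and> b \<le> q" for b
    using p infinite_nat_iff_unbounded_le by meson
  define Qf where "Qf b = (SOME q. q \<in> p \<and> b \<le> q)" for b
  define Nf where "Nf j N0 = (SOME n. n \<in> K1 \<and> N0 \<le> n \<and> Pow {..<j} \<subseteq> VV n)" for j N0
  have Qf: "Qf b \<in> p" "b \<le> Qf b" for b
    using someI_ex[OF pick_q[of b]] unfolding Qf_def by auto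
  have Nf: "Nf j N0 \<in> K1" "N0 \<le> Nf j N0" "Pow {..<j} \<subseteq> VV (Nf j N0)" for j N0
    using someI_ex[OF pick_n[of N0 j]] unfolding Nf_def by auto
  define st where "st = rec_nat (Qf 0, Nf (Suc (Qf 0)) 0)
     (\<lambda>i s. (Qf (max (Suc (fst s)) (fst (code (snd s)))),
             Nf (Suc (Qf (max (Suc (fst s)) (fst (code (snd s)))))) (Suc (snd s))))"
  define q where "q i = fst (st i)" for i
  define nn where "nn i = snd (st i)" for i
  define kk where "kk i = fst (code (nn i))" for i
  have st0: "q 0 = Qf 0" "nn 0 = Nf (Suc (q 0)) 0" by (simp_all add: q_def nn_def st_def)
  have stS: "q (Suc i) = Qf (max (Suc (q i)) (kk i))" "nn (Suc i) = Nf (Suc (q (Suc i))) (Suc (nn i))" for i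
    by (simp_all add: q_def nn_def kk_def st_def)
  have qp: "q i \<in> p" for i by (cases i) (simp_all add: st0 stS Qf)
  have nnK: "nn i \<in> K1" for i by (cases i) (simp_all add: st0 stS Nf)
  have nnV: "Pow {..<Suc (q i)} \<subseteq> VV (nn i)" for i by (cases i) (simp_all add: st0 stS Nf)
  have qS: "Suc (q i) \<le> q (Suc i)" "kk i \<le> q (Suc i)" for i
    using Qf(2)[of "max (Suc (q i)) (kk i)"] by (simp_all add: stS)
  have nS: "nn i < nn (Suc i)" for i
    using Nf(2)[of "Suc (nn i)" "Suc (q (Suc i))"] by (simp add: stS)
  have smq: "strict_mono q" by (rule strict_monoI_Suc, use qS(1) Suc_le_eq in blast)
  have smn: "strict_mono nn" by (rule strict_monoI_Suc, rule nS)
  define J where "J i = {Suc (q i)..<kk i}" for i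
  define z where "z = - (\<Union>i. J i)"
  define K where "K = range nn"
  show ?thesis
  proof (intro exI conjI)
    have "range q \<subseteq> p \<inter> z"
    proof
      fix x assume "x \<in> range q"
      then obtain i where x: "x = q i" by auto
      have "q i \<notin> J i'" for i'
      proof (cases "i \<le> i'")
        case True
        hence "q i \<le> q i'" using smq by (simp add: strict_mono_less_eq)
        thus ?thesis by (simp add: J_def)
      next
        case False
        hence "Suc i' \<le> i" by simp
        hence "q (Suc i') \<le> q i" using smq by (simp add: strict_mono_less_eq)
        hence "kk i' \<le> q i" using qS(2)[of i'] by linarith
        thus ?thesis by (simp add: J_def)
      qed
      thus "x \<in> p \<inter> z" using qp x by (auto simp: z_def)
    qed
    moreover have "infinite (range q)"
      using range_inj_infinite strict_mono_imp_inj_on[OF smq] by blast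
    ultimately show "infinite (p \<inter> z)" using finite_subset by blast
    show "K \<subseteq> a" using nnK K1a by (auto simp: K_def)
    show "infinite K" unfolding K_def
      using range_inj_infinite strict_mono_imp_inj_on[OF smn] by blast
    show "\<forall>y\<in>Y. finite {n\<in>K. y \<notin> VV n}"
    proof
      fix y assume "y \<in> Y"
      have "{n\<in>K. y \<notin> VV n} \<subseteq> {n\<in>K1. y \<notin> VV n}" using nnK by (auto simp: K_def)
      thus "finite {n\<in>K. y \<notin> VV n}" using K1S[OF \<open>y \<in> Y\<close>] by (rule finite_subset)
    qed
    show "\<forall>y. finite (y - z) \<longrightarrow> finite {n\<in>K. y \<notin> VV n}"
    proof (intro allI impI)
      fix y assume fz: "finite (y - z)"
      have "{n\<in>K. y \<notin> VV n} \<subseteq> nn ` {i. \<exists>m\<in>y - z. i < m}"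
      proof
        fix n assume n: "n \<in> {n\<in>K. y \<notin> VV n}"
        then obtain i where i: "n = nn i" by (auto simp: K_def)
        have "y \<inter> J i \<noteq> {}"
        proof
          assume "y \<inter> J i = {}"
          hence "y \<inter> {Suc (q i)..<fst (code (nn i))} = {}" by (simp add: J_def kk_def)
          moreover have "Pow {..<Suc (q i)} \<subseteq> Vc (code (nn i))" using nnV[of i] by (simp add: VV_def)
          ultimately have "y \<in> Vc (code (nn i))" using Vc_gap by blast
          thus False using n i by (simp add: VV_def)
        qed
        then obtain m where m: "m \<in> y" "m \<in> J i" by blast
        have "m \<notin> z" using m(2) by (auto simp: z_def)
        moreover have "i < m"
        proof -
          have "i \<le> q i" using seq_suble[OF smq] by simp
          moreover have "q i < m" using m(2) by (simp add: J_def)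
          ultimately show ?thesis by simp
        qed
        ultimately show "n \<in> nn ` {i. \<exists>m\<in>y - z. i < m}" using m(1) i by blast
      qed
      moreover have "finite {i. \<exists>m\<in>y - z. i < m}"
      proof -
        have "{i. \<exists>m\<in>y - z. i < m} = (\<Union>m\<in>y - z. {..<m})" by auto
        thus ?thesis using fz by simp
      qed
      ultimately show "finite {n\<in>K. y \<notin> VV n}" by (meson finite_imageI finite_subset)
    qed
  qed
qed



lemma thin_ex: assumes "infinite (w::nat set)" shows "\<exists>w'. w' \<subseteq> w \<and> infinite w' \<and> infinite (w - w')"
proof -
  let ?e = "enumerate w"
  have ie: "inj ?e" using inj_enumerate[OF assms] .
  have inw: "?e n \<in> w" for n using enumerate_in_set[OF assms] .
  define w' where "w' = range (\<lambda>n. ?e (2*n))"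
  have i1: "inj (\<lambda>n. ?e (2*n))"
  proof (rule injI)
    fix x y assume "?e (2*x) = ?e (2*y)"
    hence "2*x = 2*y" by (rule injD[OF ie])
    thus "x = y" by simp
  qed
  have i2: "inj (\<lambda>n. ?e (2*n+1))"
  proof (rule injI)
    fix x y assume "?e (2*x+1) = ?e (2*y+1)"
    hence "2*x+1 = 2*y+1" by (rule injD[OF ie])
    thus "x = y" by simp
  qed
  have "range (\<lambda>n. ?e (2*n+1)) \<subseteq> w - w'"
  proof
    fix x assume "x \<in> range (\<lambda>n. ?e (2*n+1))"
    then obtain n where x: "x = ?e (2*n+1)" by auto
    have "x \<notin> w'"
    proof
      assume "x \<in> w'"
      then obtain m where "x = ?e (2*m)" by (auto simp: w'_def)
      hence "2*m = 2*n+1" using x ie by (simp add: inj_eq)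
      thus False by presburger
    qed
    thus "x \<in> w - w'" using inw x by simp
  qed
  moreover have "infinite (range (\<lambda>n. ?e (2*n+1)))" using range_inj_infinite[OF i2] .
  ultimately have "infinite (w - w')" using finite_subset by blast
  moreover have "w' \<subseteq> w" using inw by (auto simp: w'_def)
  moreover have "infinite w'" unfolding w'_def using range_inj_infinite[OF i1] .
  ultimately show ?thesis by blast
qed

definition thin :: "nat set \<Rightarrow> nat set" where
  "thin w = (SOME w'. w' \<subseteq> w \<and> infinite w' \<and> infinite (w - w'))"

lemma thin: assumes "infinite w" shows "thin w \<subseteq> w" "infinite (thin w)" "infinite (w - thin w)"
  using someI_ex[OF thin_ex[OF assms]] unfolding thin_def by auto

definition Good :: "nat set set \<Rightarrow> nat set \<Rightarrow> bool" where
  "Good Y a \<longleftrightarrow> (\<forall>F. finite F \<and> F \<subseteq> Y \<longrightarrow> infinite {n\<in>a. F \<subseteq> VV n})"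

definition Zprop :: "nat set set \<Rightarrow> nat set \<Rightarrow> nat set \<Rightarrow> nat set \<Rightarrow> bool" where
  "Zprop Y a p z \<longleftrightarrow> infinite (p \<inter> z) \<and> (\<exists>K. K \<subseteq> a \<and> infinite K \<and> (\<forall>y\<in>Y. finite {n\<in>K. y \<notin> VV n})
           \<and> (\<forall>y. finite (y - z) \<longrightarrow> finite {n\<in>K. y \<notin> VV n}))"

definition Gstep :: "nat set set \<Rightarrow> nat set \<Rightarrow> nat set" where
  "Gstep Tw a = (let p = (SOME p. infinite p \<and> (\<forall>t\<in>Tw. finite (p - t)));
      Y = {y. finite y} \<union> Tw;
      z = (if Good Y a then (SOME z. Zprop Y a p z) else UNIV);
      w0 = p \<inter> z;
      w = (if infinite (w0 \<inter> a) then w0 \<inter> a else w0 - a);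
      b = thin w
    in if card a = 2 then insert (Max a) (b - {Min a}) else b)"

lemma Gstep_props:
  assumes pc: "p_eq_c" and inf: "\<forall>t\<in>Tw. infinite t"
    and lin: "\<forall>s\<in>Tw. \<forall>t\<in>Tw. finite (s - t) \<or> finite (t - s)"
    and card: "|Tw| <o |UNIV::real set|"
  shows "infinite (Gstep Tw a)" "\<forall>t\<in>Tw. finite (Gstep Tw a - t)"
    "\<forall>t\<in>Tw. infinite (t - Gstep Tw a)"
    "finite (Gstep Tw a - a) \<or> finite (Gstep Tw a \<inter> a)"
    "card a = 2 \<Longrightarrow> Max a \<in> Gstep Tw a \<and> Min a \<notin> Gstep Tw a"
    "Good ({y. finite y} \<union> Tw) a \<Longrightarrow> \<exists>K. K \<subseteq> a \<and> infinite K
        \<and> (\<forall>y\<in>{y. finite y} \<union> Tw. finite {n\<in>K. y \<notin> VV n})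
        \<and> (\<forall>y. finite (y - Gstep Tw a) \<longrightarrow> finite {n\<in>K. y \<notin> VV n})"
proof -
  define p where "p = (SOME p. infinite p \<and> (\<forall>t\<in>Tw. finite (p - t)))"
  define Y where "Y = {y. finite y} \<union> Tw"
  define z where "z = (if Good Y a then (SOME z. Zprop Y a p z) else UNIV)"
  define w0 where "w0 = p \<inter> z"
  define w where "w = (if infinite (w0 \<inter> a) then w0 \<inter> a else w0 - a)"
  define b where "b = thin w"
  define g where "g = (if card a = 2 then insert (Max a) (b - {Min a}) else b)"
  have gdef: "Gstep Tw a = g" unfolding Gstep_def g_def b_def w_def w0_def z_def Y_def p_def Let_def ..
  have "\<exists>p. infinite p \<and> (\<forall>t\<in>Tw. finite (p - t))"
    using p_lemma[OF pc sfip_linear[OF inf lin] card] .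
  hence "infinite p \<and> (\<forall>t\<in>Tw. finite (p - t))" unfolding p_def by (rule someI_ex)
  hence pp: "infinite p" "\<forall>t\<in>Tw. finite (p - t)" by auto
  have Yc: "|Y| <o |UNIV::real set|" unfolding Y_def
    by (rule card_of_Un_ordLess_infinite[OF _ countable_less_c[OF countable_Collect_finite] card])
       (use uncountable_UNIV_real in \<open>auto dest: countable_finite\<close>)
  have zp: "Zprop Y a p z" if "Good Y a"
  proof -
    have "\<exists>z. Zprop Y a p z" unfolding Zprop_def
      using Z_lemma[OF pc Yc _ that[unfolded Good_def] pp(1)] by (auto simp: Y_def)
    thus ?thesis using that unfolding z_def by (metis someI_ex)
  qed
  have w0inf: "infinite w0"
  proof (cases "Good Y a")
    case True thus ?thesis using zp[OF True] by (simp add: Zprop_def w0_def)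
  next
    case False thus ?thesis using pp(1) by (simp add: w0_def z_def)
  qed
  have winf: "infinite w"
  proof (cases "infinite (w0 \<inter> a)")
    case True thus ?thesis by (simp add: w_def)
  next
    case False
    have "w0 \<subseteq> (w0 \<inter> a) \<union> (w0 - a)" by blast
    hence "infinite (w0 - a)" using False w0inf by (meson finite_UnI finite_subset)
    thus ?thesis using False by (simp add: w_def)
  qed
  have bw: "b \<subseteq> w" "infinite b" "infinite (w - b)" using thin[OF winf] by (simp_all add: b_def)
  have ww0: "w \<subseteq> w0" by (auto simp: w_def)
  have gb: "g \<subseteq> insert (Max a) b" "b - {Min a} \<subseteq> g" by (auto simp: g_def)
  show "infinite (Gstep Tw a)"
  proof -
    have "infinite (b - {Min a})" using bw(2) by simp
    thus ?thesis using gb(2) gdef finite_subset by metis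
  qed
  show "\<forall>t\<in>Tw. finite (Gstep Tw a - t)"
  proof
    fix t assume "t \<in> Tw"
    have "g - t \<subseteq> insert (Max a) (p - t)" using gb(1) bw(1) ww0 by (auto simp: w0_def)
    thus "finite (Gstep Tw a - t)" using pp(2) \<open>t \<in> Tw\<close> gdef by (metis finite_insert finite_subset)
  qed
  show "\<forall>t\<in>Tw. infinite (t - Gstep Tw a)"
  proof
    fix t assume "t \<in> Tw"
    have "(w - b) - (p - t) - {Max a} \<subseteq> t - g" using gb(1) ww0 by (auto simp: w0_def)
    moreover have "infinite ((w - b) - (p - t) - {Max a})"
      using bw(3) pp(2) \<open>t \<in> Tw\<close> by (simp add: Diff_infinite_finite)
    ultimately show "infinite (t - Gstep Tw a)" using gdef finite_subset by metis
  qed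
  show "finite (Gstep Tw a - a) \<or> finite (Gstep Tw a \<inter> a)"
  proof (cases "infinite (w0 \<inter> a)")
    case True
    hence "g - a \<subseteq> {Max a}" using gb(1) bw(1) by (auto simp: w_def)
    thus ?thesis using gdef finite_subset by (metis finite.emptyI finite_insert)
  next
    case False
    hence "g \<inter> a \<subseteq> {Max a}" using gb(1) bw(1) by (auto simp: w_def)
    thus ?thesis using gdef finite_subset by (metis finite.emptyI finite_insert)
  qed
  show "card a = 2 \<Longrightarrow> Max a \<in> Gstep Tw a \<and> Min a \<notin> Gstep Tw a"
  proof -
    assume c2: "card a = 2"
    then obtain i j where ij: "a = {i, j}" "i \<noteq> j" by (meson card_2_iff)
    have "Min a \<noteq> Max a" using ij by (cases "i < j") (auto simp: min_def max_def)
    thus ?thesis using c2 gdef by (auto simp: g_def)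
  qed
  show "Good ({y. finite y} \<union> Tw) a \<Longrightarrow> \<exists>K. K \<subseteq> a \<and> infinite K
        \<and> (\<forall>y\<in>{y. finite y} \<union> Tw. finite {n\<in>K. y \<notin> VV n})
        \<and> (\<forall>y. finite (y - Gstep Tw a) \<longrightarrow> finite {n\<in>K. y \<notin> VV n})"
  proof -
    assume G: "Good ({y. finite y} \<union> Tw) a"
    hence G': "Good Y a" by (simp add: Y_def)
    from zp[OF G'] obtain K where K: "K \<subseteq> a" "infinite K" "\<forall>y\<in>Y. finite {n\<in>K. y \<notin> VV n}"
      "\<forall>y. finite (y - z) \<longrightarrow> finite {n\<in>K. y \<notin> VV n}" unfolding Zprop_def by blast
    have gz: "g - z \<subseteq> {Max a}" using gb(1) bw(1) ww0 by (auto simp: w0_def)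
    have "\<forall>y. finite (y - Gstep Tw a) \<longrightarrow> finite {n\<in>K. y \<notin> VV n}"
    proof (intro allI impI)
      fix y assume "finite (y - Gstep Tw a)"
      moreover have "y - z \<subseteq> (y - g) \<union> (g - z)" by blast
      ultimately have "finite (y - z)" using gz gdef by (metis finite.emptyI finite_insert finite_subset finite_UnI)
      thus "finite {n\<in>K. y \<notin> VV n}" using K(4) by blast
    qed
    thus ?thesis using K(1-3) by (auto simp: Y_def)
  qed
qed



definition rr :: "real rel" where "rr = |UNIV::real set|"
definition Pr :: "real \<Rightarrow> real set" where "Pr a = underS rr a"
definition RR :: "real rel" where "RR = rr - Id"

lemma rr_wo: "wo_rel rr" unfolding wo_rel_def rr_def by (rule card_of_Well_order)
lemma rr_field: "Field rr = UNIV" unfolding rr_def by (rule Field_card_of)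

lemma wfRR: "wf RR" unfolding RR_def using wo_rel.WF[OF rr_wo] .

lemma Pr_iff: "b \<in> Pr a \<longleftrightarrow> b \<noteq> a \<and> (b, a) \<in> rr" by (simp add: Pr_def underS_def)

lemma RR_iff: "(b, a) \<in> RR \<longleftrightarrow> b \<in> Pr a" by (auto simp: RR_def Pr_iff)

lemma Pr_trans: "b \<in> Pr c \<Longrightarrow> c \<in> Pr a \<Longrightarrow> b \<in> Pr a"
proof -
  assume h: "b \<in> Pr c" "c \<in> Pr a"
  hence r: "(b, c) \<in> rr" "(c, a) \<in> rr" "b \<noteq> c" "c \<noteq> a" by (auto simp: Pr_iff)
  have "(b, a) \<in> rr" using wo_rel.TRANS[OF rr_wo] r(1,2) by (rule transD)
  moreover have "b \<noteq> a"
  proof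
    assume "b = a"
    hence "(a, c) \<in> rr" using r(1) by simp
    hence "a = c" using wo_rel.ANTISYM[OF rr_wo] r(2) by (simp add: antisymD)
    thus False using r(4) by simp
  qed
  ultimately show ?thesis by (simp add: Pr_iff)
qed

lemma Pr_total: "a \<noteq> b \<Longrightarrow> a \<in> Pr b \<or> b \<in> Pr a"
  using wo_rel.TOTALS[OF rr_wo] rr_field by (auto simp: Pr_iff)

lemma Pr_irrefl: "a \<notin> Pr a" by (simp add: Pr_iff)

lemma Pr_card: "|Pr a| <o |UNIV::real set|"
  unfolding Pr_def using card_of_underS[OF card_of_Card_order, of a "UNIV::real set"]
  by (simp add: rr_def Field_card_of)

definition xx :: "real \<Rightarrow> nat set" where
  "xx = wfrec RR (\<lambda>f a. Gstep (f ` Pr a) (inv ee a))"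

lemma xx_eq: "xx a = Gstep (xx ` Pr a) (inv ee a)"
proof -
  have "xx a = Gstep ((cut xx RR a) ` Pr a) (inv ee a)"
    unfolding xx_def by (subst wfrec[OF wfRR]) simp
  moreover have "(cut xx RR a) ` Pr a = xx ` Pr a"
    by (rule image_cong) (auto simp: cut_apply RR_iff)
  ultimately show ?thesis by simp
qed

lemma xx_inv:
  assumes pc: "p_eq_c"
  shows "infinite (xx a) \<and> (\<forall>b\<in>Pr a. finite (xx a - xx b) \<and> infinite (xx b - xx a))"
proof (induction a rule: wf_induct[OF wfRR])
  case (1 a)
  have IH: "infinite (xx b) \<and> (\<forall>c\<in>Pr b. finite (xx b - xx c) \<and> infinite (xx c - xx b))"
    if "b \<in> Pr a" for b using 1 that by (simp add: RR_iff)
  let ?Tw = "xx ` Pr a"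
  have inf: "\<forall>t\<in>?Tw. infinite t" using IH by auto
  have lin: "\<forall>s\<in>?Tw. \<forall>t\<in>?Tw. finite (s - t) \<or> finite (t - s)"
  proof (intro ballI)
    fix s t assume "s \<in> ?Tw" "t \<in> ?Tw"
    then obtain b c where bc: "b \<in> Pr a" "c \<in> Pr a" "s = xx b" "t = xx c" by auto
    show "finite (s - t) \<or> finite (t - s)"
    proof (cases "b = c")
      case True thus ?thesis using bc by simp
    next
      case False
      hence "b \<in> Pr c \<or> c \<in> Pr b" by (rule Pr_total)
      thus ?thesis using IH bc by blast
    qed
  qed
  have card: "|?Tw| <o |UNIV::real set|" by (rule ordLeq_ordLess_trans[OF card_of_image Pr_card])
  note G = Gstep_props[OF pc inf lin card, of "inv ee a", folded xx_eq]
  show ?case using G(1,2,3) by blast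
qed

lemma xx_props:
  assumes pc: "p_eq_c"
  shows "infinite (xx a)"
    "finite (xx a - xx b) \<or> finite (xx b - xx a)"
    "inj xx"
    "finite (xx a - inv ee a) \<or> finite (xx a \<inter> inv ee a)"
    "card (inv ee a) = 2 \<Longrightarrow> Max (inv ee a) \<in> xx a \<and> Min (inv ee a) \<notin> xx a"
    "Good ({y. finite y} \<union> xx ` Pr a) (inv ee a) \<Longrightarrow> \<exists>K. K \<subseteq> inv ee a \<and> infinite K
        \<and> (\<forall>y\<in>{y. finite y} \<union> range xx. finite {n\<in>K. y \<notin> VV n})"
proof -
  note I = xx_inv[OF pc]
  show "infinite (xx a)" using I by blast
  show "finite (xx a - xx b) \<or> finite (xx b - xx a)"
  proof (cases "a = b")
    case True thus ?thesis by simp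
  next
    case False thus ?thesis using Pr_total[OF False] I by blast
  qed
  show "inj xx"
  proof (rule injI)
    fix a b assume e: "xx a = xx b"
    show "a = b"
    proof (rule ccontr)
      assume "a \<noteq> b"
      hence "a \<in> Pr b \<or> b \<in> Pr a" by (rule Pr_total)
      thus False using I[of a] I[of b] e by auto
    qed
  qed
  let ?Tw = "xx ` Pr a"
  have inf: "\<forall>t\<in>?Tw. infinite t" using I by auto
  have lin: "\<forall>s\<in>?Tw. \<forall>t\<in>?Tw. finite (s - t) \<or> finite (t - s)"
  proof (intro ballI)
    fix s t assume "s \<in> ?Tw" "t \<in> ?Tw"
    then obtain b c where bc: "s = xx b" "t = xx c" by auto
    show "finite (s - t) \<or> finite (t - s)"
    proof (cases "b = c")
      case True thus ?thesis using bc by simp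
    next
      case False
      hence "b \<in> Pr c \<or> c \<in> Pr b" by (rule Pr_total)
      thus ?thesis using I bc by blast
    qed
  qed
  have card: "|?Tw| <o |UNIV::real set|" by (rule ordLeq_ordLess_trans[OF card_of_image Pr_card])
  note G = Gstep_props[OF pc inf lin card, of "inv ee a", folded xx_eq]
  show "finite (xx a - inv ee a) \<or> finite (xx a \<inter> inv ee a)" by (rule G(4))
  show "card (inv ee a) = 2 \<Longrightarrow> Max (inv ee a) \<in> xx a \<and> Min (inv ee a) \<notin> xx a" by (rule G(5))
  assume gd: "Good ({y. finite y} \<union> xx ` Pr a) (inv ee a)"
  from G(6)[OF gd] obtain K where K: "K \<subseteq> inv ee a" "infinite K"
    "\<forall>y\<in>{y. finite y} \<union> xx ` Pr a. finite {n\<in>K. y \<notin> VV n}"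
    "\<forall>y. finite (y - xx a) \<longrightarrow> finite {n\<in>K. y \<notin> VV n}" by blast
  have "\<forall>y\<in>{y. finite y} \<union> range xx. finite {n\<in>K. y \<notin> VV n}"
  proof
    fix y assume "y \<in> {y. finite y} \<union> range xx"
    hence "y \<in> {y. finite y} \<union> xx ` Pr a \<or> (\<exists>c. y = xx c \<and> (c = a \<or> a \<in> Pr c))"
      using Pr_total by blast
    thus "finite {n\<in>K. y \<notin> VV n}"
    proof
      assume "y \<in> {y. finite y} \<union> xx ` Pr a" thus ?thesis using K(3) by blast
    next
      assume "\<exists>c. y = xx c \<and> (c = a \<or> a \<in> Pr c)"
      then obtain c where c: "y = xx c" "c = a \<or> a \<in> Pr c" by blast
      have "finite (y - xx a)" using c I[of c] by auto
      thus ?thesis using K(4) by blast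
    qed
  qed
  thus "\<exists>K. K \<subseteq> inv ee a \<and> infinite K \<and> (\<forall>y\<in>{y. finite y} \<union> range xx. finite {n\<in>K. y \<notin> VV n})"
    using K(1,2) by blast
qed



lemma small_pow: assumes "(e::real) > 0" shows "\<exists>k. 1 / 3^k < e"
proof -
  obtain k where "(1/3::real)^k < e" using real_arch_pow_inv[OF assms, of "1/3"] by auto
  thus ?thesis by (auto simp: power_one_over)
qed

lemma open_nbhd:
  assumes "openin (top_of_set (ee ` Z)) u" "y \<in> Z" "ee y \<in> u"
  shows "\<exists>k. \<forall>y'\<in>Z. y' \<inter> {..<k} = y \<inter> {..<k} \<longrightarrow> ee y' \<in> u"
proof -
  obtain e where e: "e > 0" "\<forall>x'\<in>ee ` Z. dist x' (ee y) < e \<longrightarrow> x' \<in> u"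
    using assms(1,3) unfolding openin_euclidean_subtopology_iff by blast
  obtain k where k: "1 / 3^k < e" using small_pow[OF e(1)] by blast
  have "\<forall>y'\<in>Z. y' \<inter> {..<k} = y \<inter> {..<k} \<longrightarrow> ee y' \<in> u"
  proof (intro ballI impI)
    fix y' assume y': "y' \<in> Z" "y' \<inter> {..<k} = y \<inter> {..<k}"
    have "dist (ee y') (ee y) \<le> 1 / 3^k" using ee_close[OF y'(2)] by (simp add: dist_real_def)
    hence "dist (ee y') (ee y) < e" using k by linarith
    thus "ee y' \<in> u" using e(2) y'(1) by blast
  qed
  thus ?thesis by blast
qed

lemma open_bit: "openin (top_of_set (ee ` Z)) (ee ` {y\<in>Z. (m \<in> y) = b})"
  unfolding openin_euclidean_subtopology_iff
proof (intro conjI ballI)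
  show "ee ` {y \<in> Z. (m \<in> y) = b} \<subseteq> ee ` Z" by auto
  fix x assume "x \<in> ee ` {y \<in> Z. (m \<in> y) = b}"
  then obtain y where y: "y \<in> Z" "(m \<in> y) = b" "x = ee y" by auto
  have "\<forall>x'\<in>ee ` Z. dist x' x < 1 / 3^(Suc m) \<longrightarrow> x' \<in> ee ` {y \<in> Z. (m \<in> y) = b}"
  proof (intro ballI impI)
    fix x' assume "x' \<in> ee ` Z" "dist x' x < 1 / 3^(Suc m)"
    then obtain y' where y': "y' \<in> Z" "x' = ee y'" "\<bar>ee y' - ee y\<bar> < 1 / 3^(Suc m)"
      using y(3) by (auto simp: dist_real_def)
    have "y' \<inter> {..<Suc m} = y \<inter> {..<Suc m}"
    proof (rule ccontr)
      assume "y' \<inter> {..<Suc m} \<noteq> y \<inter> {..<Suc m}"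
      from ee_far[OF this] y'(3) show False by linarith
    qed
    hence "(m \<in> y') = (m \<in> y)" by blast
    thus "x' \<in> ee ` {y \<in> Z. (m \<in> y) = b}" using y' y by auto
  qed
  moreover have "(0::real) < 1 / 3^(Suc m)" by simp
  ultimately show "\<exists>e>0. \<forall>x'\<in>ee ` Z. dist x' x < e \<longrightarrow> x' \<in> ee ` {y \<in> Z. (m \<in> y) = b}" by blast
qed

lemma clopen_bit:
  "openin (top_of_set (ee ` Z)) (ee ` {y\<in>Z. m \<in> y}) \<and> closedin (top_of_set (ee ` Z)) (ee ` {y\<in>Z. m \<in> y})"
proof
  show "openin (top_of_set (ee ` Z)) (ee ` {y\<in>Z. m \<in> y})" using open_bit[of Z m True] by simp
  have "ee ` Z - ee ` {y\<in>Z. m \<in> y} = ee ` {y\<in>Z. (m \<in> y) = False}"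
    using ee_inj by (auto simp: inj_eq)
  hence "openin (top_of_set (ee ` Z)) (ee ` Z - ee ` {y\<in>Z. m \<in> y})" using open_bit[of Z m False] by simp
  thus "closedin (top_of_set (ee ` Z)) (ee ` {y\<in>Z. m \<in> y})" unfolding closedin_def by auto
qed



lemma Good_mono: "Y' \<subseteq> Y \<Longrightarrow> Good Y a \<Longrightarrow> Good Y' a"
  unfolding Good_def by blast

lemma gamma_part:
  assumes pc: "p_eq_c"
  shows "binom OmegaC GammaC (ee ` ({y. finite y} \<union> range xx))"
  unfolding binom_def
proof
  define Xn where "Xn = {y. finite y} \<union> range xx"
  define XR where "XR = ee ` Xn"
  fix U assume "U \<in> OmegaC (ee ` ({y. finite y} \<union> range xx))"
  hence U: "\<forall>u\<in>U. u \<subseteq> XR" "\<Union>U = XR" "\<forall>u\<in>U. \<not> XR \<subseteq> u"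
     "\<forall>F. finite F \<and> F \<subseteq> XR \<longrightarrow> (\<exists>u\<in>U. F \<subseteq> u)" "\<forall>u\<in>U. openin (top_of_set XR) u"
    unfolding OmegaC_def omega_cover_def is_cover_def XR_def Xn_def by auto
  define codeok where "codeok n \<longleftrightarrow> (\<exists>u\<in>U. \<forall>y\<in>Xn \<inter> VV n. ee y \<in> u)" for n
  define A where "A = {n. codeok n}"
  have step2: "\<exists>n\<in>A. F \<subseteq> VV n" if F: "finite F" "F \<subseteq> Xn" for F
  proof -
    have "finite (ee ` F)" "ee ` F \<subseteq> XR" using F by (auto simp: XR_def)
    then obtain u where u: "u \<in> U" "ee ` F \<subseteq> u" using U(4) by blast
    have "\<forall>y\<in>F. \<exists>k. \<forall>y'\<in>Xn. y' \<inter> {..<k} = y \<inter> {..<k} \<longrightarrow> ee y' \<in> u"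
    proof
      fix y assume "y \<in> F"
      have o: "openin (top_of_set (ee ` Xn)) u" using U(5) u(1) unfolding XR_def by blast
      have "y \<in> Xn" using \<open>y \<in> F\<close> F(2) by blast
      moreover have "ee y \<in> u" using \<open>y \<in> F\<close> u(2) by blast
      ultimately show "\<exists>k. \<forall>y'\<in>Xn. y' \<inter> {..<k} = y \<inter> {..<k} \<longrightarrow> ee y' \<in> u"
        by (rule open_nbhd[OF o])
    qed
    from bchoice[OF this] obtain kf where kf: "\<forall>y\<in>F. \<forall>y'\<in>Xn. y' \<inter> {..<kf y} = y \<inter> {..<kf y} \<longrightarrow> ee y' \<in> u"
      by blast
    define k where "k = sum kf F"
    have kle: "kf y \<le> k" if "y \<in> F" for y unfolding k_def by (rule member_le_sum[OF that _ F(1)]) simp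
    define c where "c = (k, (\<lambda>y. y \<inter> {..<k}) ` F)"
    have "c \<in> Codes" unfolding Codes_def c_def by auto
    then obtain n where n: "code n = c" using code_onto by blast
    have FV: "F \<subseteq> VV n" using n by (auto simp: VV_def Vc_def c_def)
    have "\<forall>y'\<in>Xn \<inter> VV n. ee y' \<in> u"
    proof
      fix y' assume "y' \<in> Xn \<inter> VV n"
      then obtain y where y: "y \<in> F" "y' \<inter> {..<k} = y \<inter> {..<k}" "y' \<in> Xn"
        using n by (auto simp: VV_def Vc_def c_def)
      have "y' \<inter> {..<kf y} = y \<inter> {..<kf y}"
      proof -
        have "y' \<inter> {..<kf y} = (y' \<inter> {..<k}) \<inter> {..<kf y}" using kle[OF y(1)] by auto
        also have "\<dots> = (y \<inter> {..<k}) \<inter> {..<kf y}" using y(2) by simp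
        also have "\<dots> = y \<inter> {..<kf y}" using kle[OF y(1)] by auto
        finally show ?thesis .
      qed
      thus "ee y' \<in> u" using kf y(1,3) by blast
    qed
    hence "n \<in> A" using u(1) by (auto simp: A_def codeok_def)
    thus ?thesis using FV by blast
  qed
  define uf where "uf n = (SOME u. u \<in> U \<and> (\<forall>y\<in>Xn \<inter> VV n. ee y \<in> u))" for n
  have uf: "uf n \<in> U" "\<forall>y\<in>Xn \<inter> VV n. ee y \<in> uf n" if "n \<in> A" for n
  proof -
    have "\<exists>u. u \<in> U \<and> (\<forall>y\<in>Xn \<inter> VV n. ee y \<in> u)" using that by (auto simp: A_def codeok_def)
    hence "uf n \<in> U \<and> (\<forall>y\<in>Xn \<inter> VV n. ee y \<in> uf n)" unfolding uf_def by (rule someI_ex)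
    thus "uf n \<in> U" "\<forall>y\<in>Xn \<inter> VV n. ee y \<in> uf n" by auto
  qed
  define pt where "pt u = (SOME y. y \<in> Xn \<and> ee y \<notin> u)" for u
  have pt: "pt u \<in> Xn" "ee (pt u) \<notin> u" if "u \<in> U" for u
  proof -
    have "\<exists>y. y \<in> Xn \<and> ee y \<notin> u" using U(3) that by (auto simp: XR_def)
    hence "pt u \<in> Xn \<and> ee (pt u) \<notin> u" unfolding pt_def by (rule someI_ex)
    thus "pt u \<in> Xn" "ee (pt u) \<notin> u" by auto
  qed
  have good: "Good Xn A" unfolding Good_def
  proof (intro allI impI)
    fix F assume F: "finite F \<and> F \<subseteq> Xn"
    show "infinite {n\<in>A. F \<subseteq> VV n}"
    proof
      assume fin: "finite {n\<in>A. F \<subseteq> VV n}"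
      define N0 where "N0 = {n\<in>A. F \<subseteq> VV n}"
      define F' where "F' = F \<union> pt ` uf ` N0"
      have "finite F'" using F fin by (simp add: F'_def N0_def)
      moreover have "F' \<subseteq> Xn" using F pt(1) uf(1) by (auto simp: F'_def N0_def)
      ultimately obtain n where n: "n \<in> A" "F' \<subseteq> VV n" using step2 by blast
      hence "n \<in> N0" by (auto simp: N0_def F'_def)
      hence "pt (uf n) \<in> VV n" using n(2) by (auto simp: F'_def)
      moreover have "pt (uf n) \<in> Xn" using pt(1) uf(1) n(1) by blast
      ultimately have "ee (pt (uf n)) \<in> uf n" using uf(2)[OF n(1)] by blast
      thus False using pt(2) uf(1) n(1) by blast
    qed
  qed
  define a where "a = ee A"
  have ia: "inv ee a = A" unfolding a_def by (rule inv_f_f[OF ee_inj])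
  have "{y. finite y} \<union> xx ` Pr a \<subseteq> Xn" by (auto simp: Xn_def)
  hence "Good ({y. finite y} \<union> xx ` Pr a) (inv ee a)"
    using good unfolding ia by (rule Good_mono)
  from xx_props(6)[OF pc this] obtain K where K: "K \<subseteq> A" "infinite K"
    "\<forall>y\<in>Xn. finite {n\<in>K. y \<notin> VV n}" unfolding ia Xn_def by blast
  have hit: "ee y \<in> uf n" if "y \<in> Xn" "n \<in> K" "y \<in> VV n" for y n
    using uf(2)[of n] K(1) that by blast
  define V where "V = uf ` K"
  have VU: "V \<subseteq> U" using uf(1) K(1) by (auto simp: V_def)
  have ex_hit: "\<exists>n\<in>K'. y \<in> VV n" if "y \<in> Xn" "K' \<subseteq> K" "infinite K'" for y K'
  proof -
    have "infinite (K' - {n\<in>K. y \<notin> VV n})" using Diff_infinite_finite[OF K(3)[rule_format, OF that(1)] that(3)] .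
    then obtain n where "n \<in> K' - {n\<in>K. y \<notin> VV n}" using infinite_imp_nonempty by blast
    thus ?thesis using that(2) by blast
  qed
  have "V \<in> GammaC XR"
    unfolding GammaC_def gamma_cover_def is_cover_def
  proof (intro CollectI conjI ballI)
    show "v \<subseteq> XR" if "v \<in> V" for v using that VU U(1) by blast
    show "\<not> XR \<subseteq> v" if "v \<in> V" for v using that VU U(3) by blast
    show "openin (top_of_set XR) v" if "v \<in> V" for v using that VU U(5) by blast
    show "\<Union>V = XR"
    proof
      show "\<Union>V \<subseteq> XR" using VU U(1) by blast
      show "XR \<subseteq> \<Union>V"
      proof
        fix x assume "x \<in> XR"
        then obtain y where y: "y \<in> Xn" "x = ee y" by (auto simp: XR_def)
        obtain n where "n \<in> K" "y \<in> VV n" using ex_hit[OF y(1) order.refl K(2)] by blast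
        thus "x \<in> \<Union>V" using hit y by (auto simp: V_def)
      qed
    qed
    show "infinite V"
    proof
      assume finV: "finite V"
      have "K = (\<Union>v\<in>V. {n\<in>K. uf n = v})" by (auto simp: V_def)
      hence "\<exists>v\<in>V. infinite {n\<in>K. uf n = v}"
      proof -
        assume KU: "K = (\<Union>v\<in>V. {n\<in>K. uf n = v})"
        show ?thesis
        proof (rule ccontr)
          assume "\<not> ?thesis"
          hence "\<forall>v\<in>V. finite {n\<in>K. uf n = v}" by blast
          hence "finite (\<Union>v\<in>V. {n\<in>K. uf n = v})" using finV by (intro finite_UN_I) auto
          thus False using KU K(2) by simp
        qed
      qed
      then obtain v where v: "v \<in> V" "infinite {n\<in>K. uf n = v}" by blast
      have "XR \<subseteq> v"
      proof
        fix x assume "x \<in> XR"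
        then obtain y where y: "y \<in> Xn" "x = ee y" by (auto simp: XR_def)
        obtain n where n: "n \<in> {n\<in>K. uf n = v}" "y \<in> VV n" using ex_hit[OF y(1) _ v(2)] by blast
        thus "x \<in> v" using hit[OF y(1) _ n(2)] y(2) by auto
      qed
      thus False using v(1) VU U(3) by blast
    qed
    fix x assume "x \<in> XR"
    then obtain y where y: "y \<in> Xn" "x = ee y" by (auto simp: XR_def)
    have "{v\<in>V. x \<notin> v} \<subseteq> uf ` {n\<in>K. y \<notin> VV n}"
    proof
      fix v assume "v \<in> {v\<in>V. x \<notin> v}"
      then obtain n where n: "n \<in> K" "v = uf n" "x \<notin> v" by (auto simp: V_def)
      hence "y \<notin> VV n" using hit[OF y(1) n(1)] y(2) by blast
      thus "v \<in> uf ` {n\<in>K. y \<notin> VV n}" using n by blast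
    qed
    thus "finite {v\<in>V. x \<notin> v}" using K(3) y(1) by (meson finite_imageI finite_subset)
  qed
  thus "\<exists>V. V \<subseteq> U \<and> V \<in> GammaC (ee ` ({y. finite y} \<union> range xx))"
    using VU unfolding XR_def Xn_def by blast
qed



lemma split_part:
  assumes pc: "p_eq_c"
  shows "\<not> Split CT CT (ee ` range xx)"
proof
  define Y where "Y = ee ` range xx"
  define um where "um m = ee ` {y\<in>range xx. m \<in> y}" for m
  define U0 where "U0 = range um"
  have mem: "ee (xx a) \<in> um m \<longleftrightarrow> m \<in> xx a" for a m
  proof -
    have "ee (xx a) \<in> um m \<longleftrightarrow> xx a \<in> {y\<in>range xx. m \<in> y}"
      unfolding um_def by (rule inj_image_mem_iff[OF ee_inj])
    thus ?thesis by simp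
  qed
  have pair: "m' \<in> xx (ee {m, m'}) \<and> m \<notin> xx (ee {m, m'})" if "m < m'" for m m'
  proof -
    have ia: "inv ee (ee {m, m'}) = {m, m'}" by (rule inv_f_f[OF ee_inj])
    have "card {m, m'} = 2" using that by simp
    moreover have "Max {m, m'} = m'" "Min {m, m'} = m" using that by auto
    ultimately show ?thesis using xx_props(5)[OF pc, of "ee {m, m'}"] unfolding ia by simp
  qed
  have um_inj: "inj um"
  proof (rule injI)
    fix m m' assume e: "um m = um m'"
    show "m = m'"
    proof (rule ccontr)
      assume "m \<noteq> m'"
      hence "m < m' \<or> m' < m" by linarith
      thus False
      proof
        assume "m < m'"
        hence "m' \<in> xx (ee {m, m'})" "m \<notin> xx (ee {m, m'})" using pair by auto
        hence "ee (xx (ee {m, m'})) \<in> um m'" "ee (xx (ee {m, m'})) \<notin> um m" using mem by auto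
        thus False using e by simp
      next
        assume "m' < m"
        hence "m \<in> xx (ee {m', m})" "m' \<notin> xx (ee {m', m})" using pair by auto
        hence "ee (xx (ee {m', m})) \<in> um m" "ee (xx (ee {m', m})) \<notin> um m'" using mem by auto
        thus False using e by simp
      qed
    qed
  qed
  have U0CT: "U0 \<in> CT Y"
    unfolding CT_def tau_cover_def is_cover_def
  proof (intro CollectI conjI ballI)
    show "countable U0" unfolding U0_def by simp
    show "u \<subseteq> Y" if "u \<in> U0" for u using that by (auto simp: U0_def um_def Y_def)
    show "\<Union>U0 = Y"
    proof
      show "\<Union>U0 \<subseteq> Y" by (auto simp: U0_def um_def Y_def)
      show "Y \<subseteq> \<Union>U0"
      proof
        fix x assume "x \<in> Y"
        then obtain a where a: "x = ee (xx a)" by (auto simp: Y_def)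
        obtain m where "m \<in> xx a" using xx_props(1)[OF pc, of a] infinite_imp_nonempty by blast
        hence "x \<in> um m" using mem a by simp
        thus "x \<in> \<Union>U0" by (auto simp: U0_def)
      qed
    qed
    show "\<not> Y \<subseteq> u" if uU: "u \<in> U0" for u
    proof -
      obtain m where m: "u = um m" using uU by (auto simp: U0_def)
      have "m \<notin> xx (ee {m, Suc m})" using pair[of m "Suc m"] by simp
      hence "ee (xx (ee {m, Suc m})) \<notin> u" using mem m by simp
      moreover have "ee (xx (ee {m, Suc m})) \<in> Y" by (simp add: Y_def)
      ultimately show ?thesis by blast
    qed
    show "openin (top_of_set Y) u" if uU: "u \<in> U0" for u
    proof -
      obtain m where m: "u = um m" using uU by (auto simp: U0_def)
      show ?thesis using clopen_bit[of "range xx" m] unfolding m um_def Y_def by (rule conjunct1)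
    qed
    show "closedin (top_of_set Y) u" if uU: "u \<in> U0" for u
    proof -
      obtain m where m: "u = um m" using uU by (auto simp: U0_def)
      show ?thesis using clopen_bit[of "range xx" m] unfolding m um_def Y_def by (rule conjunct2)
    qed
    show "infinite {u\<in>U0. x \<in> u}" if xY: "x \<in> Y" for x
    proof -
      obtain a where a: "x = ee (xx a)" using xY by (auto simp: Y_def)
      have "um ` xx a \<subseteq> {u\<in>U0. x \<in> u}" using mem a by (auto simp: U0_def)
      moreover have "infinite (um ` xx a)"
      proof
        assume "finite (um ` xx a)"
        moreover have "inj_on um (xx a)" using inj_on_subset[OF um_inj subset_UNIV] .
        ultimately have "finite (xx a)" by (rule finite_imageD)
        thus False using xx_props(1)[OF pc, of a] by simp
      qed
      ultimately show ?thesis using finite_subset by blast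
    qed
    show "finite {u\<in>U0. x \<in> u \<and> y \<notin> u} \<or> finite {u\<in>U0. y \<in> u \<and> x \<notin> u}" if xyY: "x \<in> Y" "y \<in> Y" for x y
    proof -
      obtain a where a: "x = ee (xx a)" using xyY by (auto simp: Y_def)
      obtain b where b: "y = ee (xx b)" using xyY by (auto simp: Y_def)
      have s1: "{u\<in>U0. x \<in> u \<and> y \<notin> u} \<subseteq> um ` (xx a - xx b)" using mem a b by (auto simp: U0_def)
      have s2: "{u\<in>U0. y \<in> u \<and> x \<notin> u} \<subseteq> um ` (xx b - xx a)" using mem a b by (auto simp: U0_def)
      from xx_props(2)[OF pc, of a b] show ?thesis
        using s1 s2 by (meson finite_imageI finite_subset)
    qed
  qed
  assume "Split CT CT (ee ` range xx)"
  hence spl: "\<forall>U\<in>CT Y. \<exists>U1 U2. U1 \<union> U2 = U \<and> U1 \<inter> U2 = {} \<and>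
      (\<exists>V. V \<subseteq> U1 \<and> V \<in> CT Y) \<and> (\<exists>V. V \<subseteq> U2 \<and> V \<in> CT Y)" unfolding Split_def Y_def .
  obtain U1 U2 where S0: "U1 \<union> U2 = U0" "U1 \<inter> U2 = {}" "\<exists>V. V \<subseteq> U1 \<and> V \<in> CT Y" "\<exists>V. V \<subseteq> U2 \<and> V \<in> CT Y"
    using bspec[OF spl U0CT] by auto
  obtain V1 where V1: "V1 \<subseteq> U1" "V1 \<in> CT Y" using S0(3) by auto
  obtain V2 where V2: "V2 \<subseteq> U2" "V2 \<in> CT Y" using S0(4) by auto
  note S = S0(1,2) V1 V2
  define B where "B = {m. um m \<in> U1}"
  define a where "a = ee B"
  have ia: "inv ee a = B" unfolding a_def by (rule inv_f_f[OF ee_inj])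
  have xY: "ee (xx a) \<in> Y" by (simp add: Y_def)
  have i1: "infinite {u\<in>V1. ee (xx a) \<in> u}" using S(4) xY by (auto simp: CT_def tau_cover_def)
  have i2: "infinite {u\<in>V2. ee (xx a) \<in> u}" using S(6) xY by (auto simp: CT_def tau_cover_def)
  have "{u\<in>V1. ee (xx a) \<in> u} \<subseteq> um ` (xx a \<inter> B)"
  proof
    fix u assume u: "u \<in> {u\<in>V1. ee (xx a) \<in> u}"
    hence "u \<in> U0" using S(1,3) by blast
    then obtain m where m: "u = um m" by (auto simp: U0_def)
    have "m \<in> xx a" using u m mem by simp
    moreover have "m \<in> B" using u m S(3) by (auto simp: B_def)
    ultimately show "u \<in> um ` (xx a \<inter> B)" using m by blast
  qed
  hence f1: "infinite (xx a \<inter> B)" using i1 by (meson finite_imageI finite_subset)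
  have "{u\<in>V2. ee (xx a) \<in> u} \<subseteq> um ` (xx a - B)"
  proof
    fix u assume u: "u \<in> {u\<in>V2. ee (xx a) \<in> u}"
    hence "u \<in> U0" using S(1,5) by blast
    then obtain m where m: "u = um m" by (auto simp: U0_def)
    have "m \<in> xx a" using u m mem by simp
    moreover have "m \<notin> B" using u m S(2,5) by (auto simp: B_def)
    ultimately show "u \<in> um ` (xx a - B)" using m by blast
  qed
  hence f2: "infinite (xx a - B)" using i2 by (meson finite_imageI finite_subset)
  show False using xx_props(4)[OF pc, of a] f1 f2 unfolding ia by blast
qed



theorem theorem7p2:
  assumes "p_eq_c"
  shows "\<exists>X :: real set. infinite X \<and> ordIso2 (card_of X) (card_of (UNIV :: real set)) \<and>
           (\<exists>Q. Q \<subseteq> X \<and> countable Q \<and> binom OmegaC GammaC X \<and>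
                \<not> Split CT CT (X - Q))"
proof (intro exI conjI)
  let ?X = "ee ` ({y. finite y} \<union> range xx)"
  let ?Q = "ee ` {y. finite y}"
  have fin_inf: "infinite {y::nat set. finite y}"
  proof
    assume "finite {y::nat set. finite y}"
    moreover have "range (\<lambda>n::nat. {n}) \<subseteq> {y::nat set. finite y}" by auto
    ultimately have "finite (range (\<lambda>n::nat. {n}))" by (rule finite_subset[rotated])
    moreover have "inj (\<lambda>n::nat. {n})" by (auto simp: inj_def)
    ultimately show False using range_inj_infinite by blast
  qed
  have Qinf: "infinite ?Q"
  proof
    assume "finite ?Q"
    moreover have "inj_on ee {y. finite y}" using inj_on_subset[OF ee_inj subset_UNIV] .
    ultimately have "finite {y::nat set. finite y}" by (rule finite_imageD)
    thus False using fin_inf by simp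
  qed
  show "infinite ?X" using Qinf finite_subset[of ?Q ?X] by blast
  show "|?X| =o |UNIV::real set|"
  proof -
    have "|?X| \<le>o |UNIV::real set|" by (rule card_of_mono1) simp
    moreover have "|UNIV::real set| \<le>o |?X|"
    proof -
      have "inj_on (ee \<circ> xx) UNIV" using ee_inj xx_props(3)[OF assms] by (simp add: inj_compose)
      moreover have "(ee \<circ> xx) ` UNIV \<subseteq> ?X" by auto
      ultimately show ?thesis using card_of_ordLeq[of "UNIV::real set" ?X] by blast
    qed
    ultimately show ?thesis using ordIso_iff_ordLeq by blast
  qed
  show "?Q \<subseteq> ?X" by auto
  show "countable ?Q" by (intro countable_image countable_Collect_finite)
  show "binom OmegaC GammaC ?X" by (rule gamma_part[OF assms])
  have "?X - ?Q = ee ` (({y. finite y} \<union> range xx) - {y. finite y})"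
    by (rule image_set_diff[OF ee_inj, symmetric])
  also have "({y. finite y} \<union> range xx) - {y. finite y} = range xx"
    using xx_props(1)[OF assms] by auto
  finally have "?X - ?Q = ee ` range xx" .
  thus "\<not> Split CT CT (?X - ?Q)" using split_part[OF assms] by simp
qed


end
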